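(* Let $n\ge 2$ be an integer and $k$ an integer with $0\le k\le n-1$. Then $$e_k\left(\left\{\sin^2\left(\tfrac{j\pi}{2n}\right) : j=1,\dots,n-1\right\}\right) = \frac{4^{-k}(2n-k-1)!}{(2n-2k-1)!\,k!}.$$
   Context: $e_k(\alpha_1,\dots,\alpha_m)$ denotes the degree-$k$ elementary symmetric function of $\alpha_1,\dots,\alpha_m$ (with $e_0=1$). *)

theory Defs
  imports "HOL-Analysis.Analysis"
begin

definition elem_sym :: "nat \<Rightarrow> 'i set \<Rightarrow> ('i \<Rightarrow> 'a::comm_ring_1) \<Rightarrow> 'a" where
  "elem_sym k I a = (\<Sum>S\<in>{S. S \<subseteq> I \<and> card S = k}. \<Prod>i\<in>S. a i)"

end

theory Submission
  imports Defs "HOL-Computational_Algebra.Polynomial"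
begin

lemma vieta:
  fixes a :: "'i \<Rightarrow> 'a::comm_ring_1"
  assumes fin: "finite I" and k: "k \<le> card I"
  shows "coeff (\<Prod>i\<in>I. [:- a i, 1:]) (card I - k) = (-1)^k * elem_sym k I a"
proof -
  have "(\<Prod>i\<in>I. [:- a i, 1:]) = (\<Prod>i\<in>I. [:- a i:] + monom 1 1)"
    by (intro prod.cong refl) (simp add: monom_Suc)
  also have "\<dots> = (\<Sum>B\<in>Pow I. (\<Prod>i\<in>B. [:- a i:]) * (\<Prod>i\<in>I-B. monom 1 1))"
    by (rule prod_add[OF fin])
  also have "\<dots> = (\<Sum>B\<in>Pow I. [:\<Prod>i\<in>B. - a i:] * monom 1 (card (I - B)))"
    by (intro sum.cong refl) (simp add: prod_to_poly mult_monom monom_power)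
  also have "\<dots> = (\<Sum>B\<in>Pow I. smult (\<Prod>i\<in>B. - a i) (monom 1 (card (I - B))))"
    by simp
  finally have "coeff (\<Prod>i\<in>I. [:- a i, 1:]) (card I - k) =
      (\<Sum>B\<in>Pow I. if card I - k = card (I - B) then (\<Prod>i\<in>B. - a i) else 0)"
    by (simp add: coeff_sum coeff_monom eq_commute cong: if_cong) (intro sum.cong refl, auto)
  also have "\<dots> = (\<Sum>B\<in>Pow I. if card B = k then (\<Prod>i\<in>B. - a i) else 0)"
  proof (intro sum.cong refl)
    fix B assume "B \<in> Pow I"
    then have "B \<subseteq> I" by auto
    then have "card (I - B) = card I - card B" "card B \<le> card I"
      using fin by (auto simp: card_Diff_subset finite_subset card_mono)
    then show "(if card I - k = card (I - B) then (\<Prod>i\<in>B. - a i) else 0) =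
               (if card B = k then (\<Prod>i\<in>B. - a i) else 0)" using k by auto
  qed
  also have "\<dots> = (\<Sum>B\<in>{S. S \<subseteq> I \<and> card S = k}. (\<Prod>i\<in>B. - a i))"
    by (subst sum.inter_filter[symmetric]) (auto intro!: sum.cong simp: fin Pow_def)
  also have "\<dots> = (\<Sum>B\<in>{S. S \<subseteq> I \<and> card S = k}. (-1)^k * (\<Prod>i\<in>B. a i))"
    proof (intro sum.cong refl)
    fix B assume "B \<in> {S. S \<subseteq> I \<and> card S = k}"
    then have "card B = k" by auto
    have "(\<Prod>i\<in>B. - a i) = (\<Prod>i\<in>B. (-1) * a i)" by simp
    also have "\<dots> = (-1)^card B * (\<Prod>i\<in>B. a i)" by (simp only: prod.distrib prod_constant)
    finally show "(\<Prod>i\<in>B. - a i) = (-1)^k * (\<Prod>i\<in>B. a i)" using \<open>card B = k\<close> by simp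
  qed
  finally show ?thesis by (simp add: elem_sym_def sum_distrib_left)
qed

fun R :: "nat \<Rightarrow> real poly" where
  "R 0 = 0"
| "R (Suc 0) = [:2:]"
| "R (Suc (Suc m)) = [:-2, 4:] * R (Suc m) - R m"

lemma R_trig: "sin (2 * real m * t) = sin t * cos t * poly (R m) ((cos t)^2)"
proof (induction m rule: R.induct)
  case 1 then show ?case by simp
next
  case 2 then show ?case by (simp add: sin_double)
next
  case (3 m)
  have e: "sin (2 * real (Suc (Suc m)) * t) = 2 * cos (2*t) * sin (2 * real (Suc m) * t) - sin (2 * real m * t)"
  proof -
    have a: "2 * real (Suc (Suc m)) * t = 2 * real (Suc m) * t + 2*t" by (simp add: algebra_simps)
    have b: "2 * real m * t = 2 * real (Suc m) * t - 2*t" by (simp add: algebra_simps)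
    show ?thesis unfolding a b sin_add sin_diff by (simp add: algebra_simps)
  qed
  have c: "cos (2*t) = 2 * (cos t)^2 - 1" by (simp add: cos_double sin_squared_eq)
  show ?case unfolding e 3(1) 3(2) c by (simp add: algebra_simps)
qed

definition cR :: "nat \<Rightarrow> nat \<Rightarrow> real" where
  "cR m i = (-1)^(m+i+1) * 2 * 4^i * real ((m+i) choose (2*i+1))"

lemma binid: "((aa+2) choose (bb+2)) + (aa choose (bb+2)) = 2 * ((aa+1) choose (bb+2)) + (aa choose bb)"
proof -
  have "((aa+2) choose (bb+2)) = ((aa+1) choose (bb+2)) + ((aa+1) choose (bb+1))"
    using binomial_Suc_Suc[of "aa+1" "bb+1"] by simp
  moreover have "((aa+1) choose (bb+1)) = (aa choose (bb+1)) + (aa choose bb)"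
    using binomial_Suc_Suc[of "aa" "bb"] by simp
  moreover have "((aa+1) choose (bb+2)) = (aa choose (bb+2)) + (aa choose (bb+1))"
    using binomial_Suc_Suc[of "aa" "bb+1"] by simp
  ultimately show ?thesis by simp
qed

lemma cR_rec0: "cR (m+2) 0 = -2 * cR (m+1) 0 - cR m 0"
  by (simp add: cR_def algebra_simps)

lemma cR_rec: "cR (m+2) (j+1) = -2 * cR (m+1) (j+1) + 4 * cR (m+1) j - cR m (j+1)"
proof -
  define s :: real where "s = (-1)^(m+j)"
  have b: "real ((m+j+3) choose (2*j+3)) + real ((m+j+1) choose (2*j+3)) = 2 * real ((m+j+2) choose (2*j+3)) + real ((m+j+1) choose (2*j+1))"
  proof -
    have eqs: "m+j+1+2 = m+j+3" "2*j+1+2 = 2*j+3" "m+j+1+1 = m+j+2" by simp_all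
    have bn: "((m+j+3) choose (2*j+3)) + ((m+j+1) choose (2*j+3)) = 2 * ((m+j+2) choose (2*j+3)) + ((m+j+1) choose (2*j+1))"
      using binid[of "m+j+1" "2*j+1"] unfolding eqs .
    show ?thesis using arg_cong[OF bn, of real] by (simp only: of_nat_add of_nat_mult of_nat_numeral)
  qed
  have ie: "m+2+(j+1) = m+j+3" "2*(j+1)+1 = 2*j+3" "m+1+(j+1) = m+j+2" "m+1+j = m+j+1" "m+(j+1) = m+j+1"
    by simp_all
  have se: "(-1::real)^(m+j+3+1) = s" "(-1::real)^(m+j+2+1) = -s" "(-1::real)^(m+j+1+1) = s"
    by (simp_all add: s_def power_add)
  have "cR (m+2) (j+1) = s * 2 * 4^(j+1) * real ((m+j+3) choose (2*j+3))"
    unfolding cR_def ie se ..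
  moreover have "cR (m+1) (j+1) = - s * 2 * 4^(j+1) * real ((m+j+2) choose (2*j+3))"
    unfolding cR_def ie se ..
  moreover have "cR (m+1) j = s * 2 * 4^j * real ((m+j+1) choose (2*j+1))"
    unfolding cR_def ie se ..
  moreover have "cR m (j+1) = s * 2 * 4^(j+1) * real ((m+j+1) choose (2*j+3))"
    unfolding cR_def ie se ..
  moreover have gen: "\<And>A B C D. A + D = 2*B + C \<Longrightarrow> s*2*4^(j+1)*A = -2*(-s*2*4^(j+1)*B) + 4*(s*2*4^j*C) - s*2*4^(j+1)*D"
  proof -
    fix A B C D :: real assume h: "A + D = 2*B + C"
    define K :: real where "K = s*2*4^(j+1)"
    have "s*2*4^(j+1)*A = K * (A + D) - K * D" by (simp add: K_def algebra_simps)
    also have "\<dots> = K * (2*B + C) - K * D" using h by simp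
    also have "\<dots> = -2*(-s*2*4^(j+1)*B) + 4*(s*2*4^j*C) - s*2*4^(j+1)*D"
      by (simp add: K_def algebra_simps)
    finally show "s*2*4^(j+1)*A = -2*(-s*2*4^(j+1)*B) + 4*(s*2*4^j*C) - s*2*4^(j+1)*D" .
  qed
  ultimately show ?thesis using b by (simp only:)
qed

lemma coeff_R: "coeff (R m) i = cR m i"
proof (induction m arbitrary: i rule: R.induct)
  case 1 then show ?case by (simp add: cR_def)
next
  case 2 then show ?case
    by (cases i) (auto simp: cR_def coeff_pCons binomial_eq_0 split: nat.splits)
next
  case (3 m)
  have p: "[:-2, 4:] * p = smult (-2) p + pCons 0 (smult 4 p)" for p :: "real poly"
    by (simp add: algebra_simps)
  show ?case
  proof (cases i)
    case 0
    then show ?thesis unfolding R.simps p using 3 cR_rec0[of m]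
      by simp
  next
    case (Suc j)
    then show ?thesis unfolding R.simps p using 3 cR_rec[of m j]
      by simp
  qed
qed


theorem mainTheorem8:
  fixes n k :: nat
  assumes "n \<ge> 2" and "k \<le> n - 1"
  shows "elem_sym k {1..n-1} (\<lambda>j. (sin (real j * pi / (2 * real n)))^2)
         = (1/4)^k * fact (2*n-k-1) / (fact (2*n-2*k-1) * fact k)"
proof -
  define I where "I = {1..n-1}"
  define a where "a = (\<lambda>j::nat. real j * pi / (2 * real n))"
  define x where "x = (\<lambda>j. (sin (a j))^2)"
  define P where "P = (\<Prod>j\<in>I. [:- x j, 1:])"
  define c :: real where "c = 2 * 4^(n-1)"
  have n0: "real n > 0" using assms by simp
  have cardI: "card I = n - 1" by (simp add: I_def)
  have finI: "finite I" by (simp add: I_def)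
  have a_range: "0 < a j \<and> a j < pi/2" if "j \<in> I" for j
  proof -
    have j: "1 \<le> j" "j < n" using that assms by (auto simp: I_def)
    have "0 < a j" using j n0 by (simp add: a_def)
    moreover have "a j < pi/2"
    proof -
      have "real j < real n" using j by simp
      then have "real j * pi < real n * pi" by simp
      then show ?thesis using n0 by (simp add: a_def field_simps)
    qed
    ultimately show ?thesis by simp
  qed
  have roots: "poly (R n) (x j) = 0" if "j \<in> I" for j
  proof -
    define t where "t = pi/2 - a j"
    have jn: "j \<le> n" using that by (auto simp: I_def)
    have "2 * real n * t = real (n - j) * pi"
      using n0 jn by (simp add: t_def a_def field_simps of_nat_diff)
    then have "sin (2 * real n * t) = 0" by simp
    moreover have "cos t = sin (a j)" by (simp add: t_def cos_sin_eq)
    moreover have "sin t = cos (a j)" by (simp add: t_def sin_cos_eq)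
    moreover have "sin (a j) > 0" using a_range[OF that] by (intro sin_gt_zero) auto
    moreover have "cos (a j) > 0" using a_range[OF that] by (intro cos_gt_zero) auto
    ultimately show ?thesis using R_trig[of n t] by (simp add: x_def)
  qed
  have inj: "inj_on x I"
  proof (rule inj_onI)
    fix i j assume ij: "i \<in> I" "j \<in> I" "x i = x j"
    have si: "sin (a i) > 0" "sin (a j) > 0"
      using a_range[OF ij(1)] a_range[OF ij(2)] by (auto intro!: sin_gt_zero)
    have "sin (a i) = sin (a j)"
      using ij(3) si by (simp add: x_def power2_eq_iff_nonneg)
    moreover have "\<not> a i < a j"
      using a_range[OF ij(1)] a_range[OF ij(2)] sin_monotone_2pi[of "a i" "a j"] \<open>sin (a i) = sin (a j)\<close> by auto
    moreover have "\<not> a j < a i"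
      using a_range[OF ij(1)] a_range[OF ij(2)] sin_monotone_2pi[of "a j" "a i"] \<open>sin (a i) = sin (a j)\<close> by auto
    ultimately have "a i = a j" by linarith
    then show "i = j" using n0 by (simp add: a_def)
  qed
  have coeffRn: "coeff (R n) i = 0" if "i \<ge> n" for i
    using that by (simp add: coeff_R cR_def binomial_eq_0)
  have lcR: "coeff (R n) (n-1) = c"
  proof -
    have "n - 1 + n + 1 = 2 * n" "2 * (n-1) + 1 = n - 1 + n" using assms by auto
    then show ?thesis using assms by (simp add: coeff_R cR_def c_def)
  qed
  have degP: "degree P \<le> n - 1"
  proof -
    have "degree P \<le> sum (degree \<circ> (\<lambda>j. [:- x j, 1:])) I"
      unfolding P_def by (rule degree_prod_sum_le[OF finI])
    also have "\<dots> = n - 1" using cardI by simp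
    finally show ?thesis .
  qed
  have lcP: "coeff P (n-1) = 1"
  proof -
    have "coeff P (card I - 0) = (-1)^0 * elem_sym 0 I x"
      unfolding P_def by (rule vieta[OF finI]) simp
    moreover have "{S. S \<subseteq> I \<and> card S = 0} = {{}}"
      using finI by (auto dest: finite_subset)
    ultimately show ?thesis using cardI by (simp add: elem_sym_def)
  qed
  define D where "D = R n - smult c P"
  have D0: "D = 0"
  proof (rule ccontr)
    assume "D \<noteq> 0"
    have "degree D \<le> n - 2"
    proof (rule degree_le, intro allI impI)
      fix i assume "n - 2 < i"
      show "coeff D i = 0"
      proof (cases "i = n - 1")
        case True then show ?thesis using lcR lcP by (simp add: D_def)
      next
        case False
        then have "i \<ge> n" "i > degree P" using \<open>n - 2 < i\<close> degP assms by auto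
        then show ?thesis using coeffRn by (simp add: D_def coeff_eq_0)
      qed
    qed
    moreover have "card (x ` I) \<le> card {y. poly D y = 0}"
    proof (rule card_mono)
      show "finite {y. poly D y = 0}" using poly_roots_finite[OF \<open>D \<noteq> 0\<close>] .
      show "x ` I \<subseteq> {y. poly D y = 0}"
      proof
        fix y assume "y \<in> x ` I"
        then obtain j where j: "j \<in> I" "y = x j" by auto
        have "poly P (x j) = 0" unfolding P_def using j(1) finI
          by (simp add: poly_prod prod_zero_iff) (use j(1) in blast)
        then show "y \<in> {y. poly D y = 0}" using roots[OF j(1)] j by (simp add: D_def)
      qed
    qed
    moreover have "card {y. poly D y = 0} \<le> degree D"
      by (rule card_poly_roots_bound[OF \<open>D \<noteq> 0\<close>])
    moreover have "card (x ` I) = n - 1" using card_image[OF inj] cardI by simp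
    ultimately show False using assms by linarith
  qed
  then have RP: "R n = smult c P" by (simp add: D_def)
  have kI: "k \<le> card I" using assms cardI by simp
  have "elem_sym k I x = (-1)^k * coeff P (n - 1 - k)"
    using vieta[OF finI kI, of x] cardI unfolding P_def by simp
  also have "coeff P (n - 1 - k) = cR n (n - 1 - k) / c"
    using RP coeff_R[of n "n-1-k"] by (simp add: c_def eq_divide_eq mult.commute)
  also have "cR n (n - 1 - k) = (-1)^k * 2 * 4^(n-1-k) * real ((2*n-k-1) choose k)"
  proof -
    have e1: "n + (n - 1 - k) + 1 = 2*n - k" using assms by auto
    have e2: "n + (n - 1 - k) = 2*n-k-1" "2 * (n - 1 - k) + 1 = 2*n-2*k-1" using assms by auto
    have e3: "(2*n-k-1) choose (2*n-2*k-1) = (2*n-k-1) choose k"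
      using assms by (subst binomial_symmetric) (auto intro: arg_cong2[where f="(choose)"])
    have e4: "(-1::real)^(2*n-k-1+1) = (-1)^k"
    proof -
      have "2*n-k-1+1 = k + 2*(n-k)" using assms by auto
      then show ?thesis by (simp add: power_add power_mult)
    qed
    show ?thesis unfolding cR_def e2 e3 e4 ..
  qed
  finally have "elem_sym k I x = (-1)^k * ((-1)^k * 2 * 4^(n-1-k) * real ((2*n-k-1) choose k) / c)" .
  also have "\<dots> = 4^(n-1-k) / 4^(n-1) * real ((2*n-k-1) choose k)"
  proof -
    have m1: "(-1::real)^k * (-1)^k = 1" by (simp flip: power_mult_distrib)
    have "(-1::real)^k * ((-1)^k * 2 * 4^(n-1-k) * real ((2*n-k-1) choose k) / c)
        = ((-1)^k * (-1)^k) * (2 * 4^(n-1-k) * real ((2*n-k-1) choose k) / c)" by (simp add: algebra_simps)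
    also have "\<dots> = 2 * 4^(n-1-k) * real ((2*n-k-1) choose k) / (2 * 4^(n-1))" by (simp only: m1 c_def mult_1_left)
    also have "\<dots> = 4^(n-1-k) / 4^(n-1) * real ((2*n-k-1) choose k)" by simp
    finally show ?thesis .
  qed
  also have "4^(n-1-k) / 4^(n-1) = (1/4::real)^k"
  proof -
    have "(4::real)^(n-1) = 4^(n-1-k) * 4^k" using assms by (simp flip: power_add)
    then show ?thesis by (simp add: power_one_over)
  qed
  also have "real ((2*n-k-1) choose k) = fact (2*n-k-1) / (fact (2*n-2*k-1) * fact k)"
  proof -
    have "k \<le> 2*n-k-1" "2*n-k-1-k = 2*n-2*k-1" using assms by auto
    then show ?thesis by (simp add: binomial_fact mult.commute)
  qed
  finally show ?thesis by (simp add: I_def x_def a_def)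
qed

end
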